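(* Let $N^h\ge 2$ be an integer and $h=1/N^h$. Let $\lambda_j=j^2\pi^2$ be the $j$-th exact eigenvalue of $-u''=\lambda u$ on $(0,1)$ with $u(0)=u(1)=0$, and let $\lambda^h_{sq,j}$ be the $j$-th approximate eigenvalue (eigenvalues sorted in nondecreasing order, counting multiplicity) of the linear SoftFEMBQ generalized matrix eigenvalue problem $(\mathbf{K}-\eta_K\mathbf{S})\mathbf{U}=\lambda^h(\alpha\mathbf{M}_G+(1-\alpha)\mathbf{M}_L)\mathbf{U}$ described in the context, with $\eta_K=\frac{1}{20}$ and $\alpha=\frac45$. Then \[ \frac{|\lambda^h_{sq,j}-\lambda_j|}{\lambda_j}<\frac{1}{1440}(j\pi h)^6\qquad\text{for all } j\in\{1,\dots,N^h-1\}. \]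
   Context: Setting (linear finite elements, SoftFEM with blended quadrature, in 1D): Let $x_k=kh$, $k=0,\dots,N^h$, be a uniform mesh of $[0,1]$. Let $V^h$ be the space of continuous functions on $[0,1]$ that are affine on each $[x_{k-1},x_k]$ and vanish at $0$ and $1$, with hat basis $\phi_k$, $k=1,\dots,N^h-1$, $\phi_k(x_l)=\delta_{kl}$. For $v\in V^h$ and an interior node $x_k$ let $[\![v']\!](x_k)=v'(x_k^-)-v'(x_k^+)$. Define $a(v,w)=\int_0^1 v'w'\,dx$, $s(v,w)=\sum_{k=1}^{N^h-1} h\,[\![v']\!](x_k)[\![w']\!](x_k)$, $\mathbf{K}_{kl}=a(\phi_l,\phi_k)$, $\mathbf{S}_{kl}=s(\phi_l,\phi_k)$. $\mathbf{M}_G$ is the mass matrix $\int_0^1\phi_l\phi_k\,dx$ computed elementwise by the 2-point Gauss–Legendre rule, and $\mathbf{M}_L$ the one computed by the 2-point Gauss–Lobatto (trapezoidal) rule. Explicitly, $\mathbf{K}=\frac1h\,\mathrm{tridiag}(-1,2,-1)$, $\mathbf{M}_G=h\,\mathrm{tridiag}(\tfrac16,\tfrac23,\tfrac16)$, $\mathbf{M}_L=h\,\mathbf{I}$, and $\mathbf{S}=\frac1h$ times the symmetric pentadiagonal matrix with rows $(1,-4,6,-4,1)$ except that the first and last diagonal entries are $5$; all are $(N^h-1)\times(N^h-1)$. *)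

theory Defs
  imports "Jordan_Normal_Form.Determinant" "HOL-Library.Multiset"
begin

text \<open>Uniform mesh x_k = k h, h = 1/N on [0,1]. Interior nodes x_1..x_{N-1} are
  indexed 0..N-2 (index i corresponds to node i+1). Matrix size N-1.\<close>

definition mesh_h :: "nat \<Rightarrow> real" where
  "mesh_h N = 1 / real N"

text \<open>Stiffness matrix K_kl = a(phi_l, phi_k) = (1/h) tridiag(-1,2,-1).\<close>
definition stiff :: "nat \<Rightarrow> real mat" where
  "stiff N = mat (N - 1) (N - 1) (\<lambda>(i, j).
     if i = j then 2 / mesh_h N
     else if i = j + 1 \<or> j = i + 1 then - 1 / mesh_h N else 0)"

text \<open>Jump [[phi_l']](x_m) = phi_l'(x_m^-) - phi_l'(x_m^+) of hat function l at interior node m.\<close>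
definition hat_jump :: "nat \<Rightarrow> nat \<Rightarrow> nat \<Rightarrow> real" where
  "hat_jump N m l =
     (if m = l then 2 / mesh_h N
      else if m = l + 1 \<or> l = m + 1 then - 1 / mesh_h N else 0)"

definition stab :: "nat \<Rightarrow> real mat" where
  "stab N = mat (N - 1) (N - 1) (\<lambda>(i, j).
     (\<Sum>m<N - 1. mesh_h N * hat_jump N m j * hat_jump N m i))"

text \<open>Gauss-Legendre mass matrix h tridiag(1/6, 2/3, 1/6).\<close>
definition mass_G :: "nat \<Rightarrow> real mat" where
  "mass_G N = mat (N - 1) (N - 1) (\<lambda>(i, j).
     if i = j then mesh_h N * (2/3)
     else if i = j + 1 \<or> j = i + 1 then mesh_h N * (1/6) else 0)"

text \<open>Gauss-Lobatto (lumped) mass matrix h I.\<close>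
definition mass_L :: "nat \<Rightarrow> real mat" where
  "mass_L N = mat (N - 1) (N - 1) (\<lambda>(i, j). if i = j then mesh_h N else 0)"

definition pencil_poly :: "real mat \<Rightarrow> real mat \<Rightarrow> real poly" where
  "pencil_poly A B = det (mat (dim_row A) (dim_col A) (\<lambda>(i, j). [: A $$ (i, j), - (B $$ (i, j)) :]))"

definition root_mset :: "real poly \<Rightarrow> real multiset" where
  "root_mset p = Abs_multiset (\<lambda>x. order x p)"

text \<open>Generalized eigenvalues of A U = lambda B U, sorted nondecreasingly with multiplicity;
  the j-th one (j \<ge> 1) is at list index j - 1.\<close>
definition gen_eig :: "real mat \<Rightarrow> real mat \<Rightarrow> nat \<Rightarrow> real" where
  "gen_eig A B j = sorted_list_of_multiset (root_mset (pencil_poly A B)) ! (j - 1)"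

definition softfembq_eig :: "real \<Rightarrow> real \<Rightarrow> nat \<Rightarrow> nat \<Rightarrow> real" where
  "softfembq_eig eta alpha N j =
     gen_eig (stiff N - eta \<cdot>\<^sub>m stab N) (alpha \<cdot>\<^sub>m mass_G N + (1 - alpha) \<cdot>\<^sub>m mass_L N) j"

end

theory Submission
  imports Defs
begin

lemma cos_upper: fixes x :: real shows "cos x \<le> 1 - x^2/2 + x^4/24 - x^6/720 + x^8/40320"
proof -
  obtain t where t: "cos x = (\<Sum>m<8. cos_coeff m * x ^ m) + (cos(t + 1/2 * real 8 * pi) / fact 8) * x ^ 8"
    using Maclaurin_cos_expansion by blast
  have e: "{..<8::nat} = {0,1,2,3,4,5,6,7}" by auto
  have s: "(\<Sum>m<8. cos_coeff m * x ^ m) = 1 - x^2/2 + x^4/24 - x^6/720"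
    unfolding e by (simp add: cos_coeff_def fact_numeral)
  have c: "cos(t + 1/2 * real 8 * pi) = cos t"
  proof -
    have "t + 1/2 * real 8 * pi = t + real 4 * pi" by simp
    then show ?thesis by (simp only: cos_add cos_npi sin_npi) simp
  qed
  have "cos t * x^8 \<le> x^8" using mult_right_mono[OF cos_le_one[of t], of "x^8"] by simp
  then show ?thesis using t s c by (simp add: fact_numeral)
qed

lemma cos_lower: fixes x :: real shows "1 - x^2/2 + x^4/24 - x^6/720 \<le> cos x"
proof -
  obtain t where t: "cos x = (\<Sum>m<6. cos_coeff m * x ^ m) + (cos(t + 1/2 * real 6 * pi) / fact 6) * x ^ 6"
    using Maclaurin_cos_expansion by blast
  have e: "{..<6::nat} = {0,1,2,3,4,5}" by auto
  have s: "(\<Sum>m<6. cos_coeff m * x ^ m) = 1 - x^2/2 + x^4/24"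
    unfolding e by (simp add: cos_coeff_def fact_numeral)
  have c: "cos(t + 1/2 * real 6 * pi) = - cos t"
  proof -
    have "t + 1/2 * real 6 * pi = t + real 3 * pi" by simp
    then show ?thesis by (simp only: cos_add cos_npi sin_npi) simp
  qed
  have "cos t * x^6 \<le> x^6" using mult_right_mono[OF cos_le_one[of t], of "x^6"] by simp
  then show ?thesis using t s c by (simp add: fact_numeral)
qed

lemma idGL: "3*(1-(1 - s/2 + s^2/24 - s^3/720))*(9+(1 - s/2 + s^2/24 - s^3/720)) - s*(1 + s^3/1440)*(11+4*(1 - s/2 + s^2/24 - s^3/720)) = (s::real)^4 * ((2*s^3 - 63*s^2 + 900*s - 7380)/518400)"
  by (simp add: field_simps) Groebner_Basis.algebra

lemma idGU: "3*(1-(1 - s/2 + s^2/24 - s^3/720 + s^4/40320))*(9+(1 - s/2 + s^2/24 - s^3/720 + s^4/40320)) - s*(1 - s^3/1440)*(11+4*(1 - s/2 + s^2/24 - s^3/720 + s^4/40320)) = (s::real)^4 * ((109*s^4 - 5936*s^3 + 168672*s^2 - 1733760*s + 9515520)/1625702400)"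
  by Groebner_Basis.algebra

lemma idP: "109*(s::real)^4 - 5936*s^3 + 168672*s^2 - 1733760*s + 9515520 = 109*(s^2 - 2968/109*s + 250)^2 + (3635724/109)*(s - 3402980/908931)^2 + 2031894529220/908931"
  by (simp add: field_simps) Groebner_Basis.algebra

lemma key_ineq: fixes t :: real assumes t0: "0 < t" and tpi: "t \<le> pi"
  shows "\<bar>3*(1-cos t)*(9+cos t)/(11+4*cos t) - t^2\<bar> / t^2 < t^6/1440"
proof -
  define c where "c = cos t"
  define s where "s = t^2"
  have s0: "0 < s" using t0 by (simp add: s_def)
  have s16: "s \<le> 16"
  proof -
    have "t \<le> 4" using tpi pi_less_4 by linarith
    then have "t*t \<le> 4*4" using t0 by (intro mult_mono) auto
    then show ?thesis by (simp add: s_def power2_eq_square)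
  qed
  define L where "L = 1 - s/2 + s^2/24 - s^3/720"
  define U where "U = 1 - s/2 + s^2/24 - s^3/720 + s^4/40320"
  have t4: "t^4 = s^2" "t^6 = s^3" "t^8 = s^4" unfolding s_def by Groebner_Basis.algebra+
  have Le: "L = 1 - t^2/2 + t^4/24 - t^6/720" unfolding L_def t4 s_def ..
  have Ue: "U = 1 - t^2/2 + t^4/24 - t^6/720 + t^8/40320" unfolding U_def t4 s_def ..
  have cL: "L \<le> c" using cos_lower[of t] unfolding Le c_def .
  have cU: "c \<le> U" using cos_upper[of t] unfolding Ue c_def .
  have cm1: "-1 \<le> c" "c \<le> 1" by (simp_all add: c_def)
  have c1: "c < 1"
  proof -
    have "cos t < cos 0" using t0 tpi by (subst cos_mono_less_eq) auto
    then show ?thesis by (simp add: c_def)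
  qed
  define X where "X = 3*(1-c)*(9+c)"
  define D where "D = 11 + 4*c"
  have D0: "D > 0" using cm1 by (simp add: D_def)
  have Lm3: "L \<ge> -3"
  proof -
    have "s^3 - 30*s^2 + 360*s - 2880 = (s-16)*((s-7)^2+87) - 704"
      by Groebner_Basis.algebra
    moreover have "(s-16)*((s-7)^2+87) \<le> 0" using s16
      by (intro mult_nonpos_nonneg) auto
    ultimately show ?thesis by (simp add: L_def)
  qed
  define la where "la = 1 + s^3/1440"
  have la0: "la > 0" using s0 unfolding la_def by (simp add: add_pos_nonneg)
  have GL: "3*(1-L)*(9+L) - s*la*(11+4*L) = s^4 * ((2*s^3 - 63*s^2 + 900*s - 7380)/518400)"
    unfolding L_def la_def by (rule idGL)
  have pneg: "2*s^3 - 63*s^2 + 900*s - 7380 < 0"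
  proof -
    have "2*s^3 - 63*s^2 + 900*s - 7380 = (s-16)*(2*(s - 31/4)^2 + 2271/8) - 916"
      by Groebner_Basis.algebra
    moreover have "(s-16)*(2*(s - 31/4)^2 + 2271/8) \<le> 0" using s16
      by (intro mult_nonpos_nonneg) auto
    ultimately show ?thesis by simp
  qed
  have GcL: "X - s*la*D - (3*(1-L)*(9+L) - s*la*(11+4*L)) = -(c-L)*(24 + 3*(c+L) + 4*s*la)"
    unfolding X_def D_def by Groebner_Basis.algebra
  have "(c-L)*(24 + 3*(c+L) + 4*s*la) \<ge> 0"
    using cL cm1 Lm3 s0 la0 by (intro mult_nonneg_nonneg) auto
  moreover have "s^4 * ((2*s^3 - 63*s^2 + 900*s - 7380)/518400) < 0"
    using s0 pneg by (intro mult_pos_neg) auto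
  ultimately have up: "X - s*la*D < 0" using GcL GL by linarith
  define lb where "lb = 1 - s^3/1440"
  have low: "X - s*lb*D > 0"
  proof (cases "lb \<le> 0")
    case True
    have "X > 0" using c1 cm1 by (simp add: X_def)
    moreover have "s*lb*D \<le> 0" using True s0 D0
      by (simp add: mult_nonneg_nonpos mult_nonpos_nonneg)
    ultimately show ?thesis by linarith
  next
    case False
    define P where "P = 109*s^4 - 5936*s^3 + 168672*s^2 - 1733760*s + 9515520"
    have Pe: "P = 109*(s^2 - 2968/109*s + 250)^2 + (3635724/109)*(s - 3402980/908931)^2 + 2031894529220/908931"
      unfolding P_def by (rule idP)
    have P0: "P > 0" unfolding Pe
      by (intro add_nonneg_pos add_nonneg_nonneg) auto
    have GU: "3*(1-U)*(9+U) - s*lb*(11+4*U) = s^4 * (P/1625702400)"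
      unfolding U_def lb_def P_def by (rule idGU)
    have GcU: "X - s*lb*D - (3*(1-U)*(9+U) - s*lb*(11+4*U)) = (U-c)*(24 + 3*(c+U) + 4*s*lb)"
      unfolding X_def D_def by Groebner_Basis.algebra
    have "(U-c)*(24 + 3*(c+U) + 4*s*lb) \<ge> 0"
      using cU cm1 s0 False by (intro mult_nonneg_nonneg) auto
    moreover have "s^4 * (P/1625702400) > 0" using s0 P0 by (intro mult_pos_pos) auto
    ultimately show ?thesis using GU GcU by linarith
  qed
  have e1: "s*la*D = s*D + s^4*D/1440" unfolding la_def by Groebner_Basis.algebra
  have e2: "s*lb*D = s*D - s^4*D/1440" unfolding lb_def by Groebner_Basis.algebra
  have ab: "\<bar>X - s*D\<bar> < s^4*D/1440"
    using up low e1 e2 unfolding abs_less_iff by linarith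
  have e3: "X/D - s = (X - s*D)/D" using D0 by (simp add: field_simps)
  have "\<bar>X/D - s\<bar> = \<bar>X - s*D\<bar>/D" using D0 unfolding e3 by simp
  also have "... < (s^4*D/1440)/D" using ab D0 by (intro divide_strict_right_mono) auto
  also have "... = s^4/1440" using D0 by simp
  finally have f1: "\<bar>X/D - s\<bar> < s^4/1440" .
  have "\<bar>X/D - s\<bar> / s < (s^4/1440)/s" using f1 s0 by (intro divide_strict_right_mono) auto
  also have "(s^4/1440)/s = s^3/1440" using s0 by (simp add: power4_eq_xxxx power3_eq_cube)
  finally have "\<bar>X/D - s\<bar> / s < s^3/1440" .
  moreover have "X/D = 3*(1-cos t)*(9+cos t)/(11+4*cos t)" by (simp add: X_def D_def c_def)
  ultimately show ?thesis unfolding t4(2)[symmetric] s_def by simp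
qed



definition th :: "nat \<Rightarrow> nat \<Rightarrow> real" where "th N j = real (Suc j) * pi / real N"
definition Wf :: "nat \<Rightarrow> nat \<Rightarrow> nat \<Rightarrow> real" where "Wf N j i = sin (real i * th N j)"
definition mu :: "nat \<Rightarrow> nat \<Rightarrow> real" where "mu N j = 2 - 2 * cos (th N j)"

lemma Wf_0: "Wf N j 0 = 0" by (simp add: Wf_def)

lemma Wf_N: assumes "N > 0" shows "Wf N j N = 0"
proof -
  have "real N * th N j = real (Suc j) * pi" using assms by (simp add: th_def)
  then show ?thesis unfolding Wf_def by (simp only: sin_npi)
qed

lemma Wf_rec: "2*Wf N j (Suc k) - Wf N j k - Wf N j (Suc (Suc k)) = mu N j * Wf N j (Suc k)"
proof -
  define a where "a = real (Suc k) * th N j"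
  define b where "b = th N j"
  have 1: "real k * th N j = a - b" by (simp add: a_def b_def algebra_simps)
  have 2: "real (Suc (Suc k)) * th N j = a + b" by (simp add: a_def b_def algebra_simps)
  have key: "2*sin a - sin(a-b) - sin(a+b) = (2-2*cos b)*sin a" by (simp add: sin_add sin_diff algebra_simps)
  have w1: "Wf N j k = sin (a - b)" using 1 by (simp add: Wf_def)
  have w2: "Wf N j (Suc (Suc k)) = sin (a + b)" using 2 by (simp add: Wf_def)
  have w3: "Wf N j (Suc k) = sin a" by (simp add: Wf_def a_def)
  show ?thesis unfolding w1 w2 w3 mu_def b_def[symmetric] using key .
qed

lemma hat_sym: "hat_jump N m l = hat_jump N l m"
  by (auto simp: hat_jump_def)

lemma tri_sum:
  fixes w :: "nat \<Rightarrow> real"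
  assumes k: "k < N - 1" and w0: "w 0 = 0" and wN: "w N = 0"
  shows "(\<Sum>l<N-1. hat_jump N k l * w (Suc l)) = (2*w(Suc k) - w k - w(Suc(Suc k))) / mesh_h N"
proof -
  define h where "h = mesh_h N"
  have pt: "hat_jump N k l * w (Suc l) = (if l = k then 2*w(Suc k)/h else 0) + (if Suc l = k then -w k/h else 0)
      + (if l = Suc k then -w(Suc(Suc k))/h else 0)" for l
    by (auto simp: hat_jump_def h_def)
  have S1: "(\<Sum>l<N-1. (if l = k then 2*w(Suc k)/h else 0)) = 2*w(Suc k)/h"
    using k by simp
  have S2: "(\<Sum>l<N-1. (if Suc l = k then -w k/h else 0)) = -w k/h"
  proof (cases k)
    case 0 then show ?thesis using w0 by simp
  next
    case (Suc k')
    then have "(\<Sum>l<N-1. (if Suc l = k then -w k/h else 0)) = (\<Sum>l<N-1. (if l = k' then -w k/h else 0))"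
      by (intro sum.cong) auto
    also have "\<dots> = -w k/h" using k Suc by simp
    finally show ?thesis .
  qed
  have S3: "(\<Sum>l<N-1. (if l = Suc k then -w(Suc(Suc k))/h else 0)) = -w(Suc(Suc k))/h"
  proof (cases "Suc k < N - 1")
    case True then show ?thesis by simp
  next
    case False
    then have "Suc (Suc k) = N" using k by linarith
    then show ?thesis using wN False by simp
  qed
  have "(\<Sum>l<N-1. hat_jump N k l * w (Suc l)) = 2*w(Suc k)/h + -w k/h + -w(Suc(Suc k))/h"
    unfolding pt sum.distrib S1 S2 S3 ..
  then show ?thesis by (simp add: h_def diff_divide_distrib)
qed

lemma J_eig:
  assumes k: "k < N - 1" and N: "N \<ge> 2"
  shows "(\<Sum>l<N-1. hat_jump N k l * Wf N j (Suc l)) = mu N j / mesh_h N * Wf N j (Suc k)"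
  using tri_sum[OF k, of "Wf N j"] Wf_0 Wf_N[of N j] N Wf_rec[of N j k] by simp

lemma S_eig:
  fixes w :: "nat \<Rightarrow> real"
  assumes H: "\<And>m. m < N-1 \<Longrightarrow> (\<Sum>l<N-1. hat_jump N m l * w (Suc l)) = e * w (Suc m)" and k: "k < N - 1"
  shows "(\<Sum>l<N-1. (\<Sum>m<N-1. mesh_h N * hat_jump N m l * hat_jump N m k) * w (Suc l))
     = mesh_h N * e^2 * w (Suc k)"
proof -
  have "(\<Sum>l<N-1. (\<Sum>m<N-1. mesh_h N * hat_jump N m l * hat_jump N m k) * w (Suc l))
     = (\<Sum>l<N-1. \<Sum>m<N-1. mesh_h N * hat_jump N k m * (hat_jump N m l * w (Suc l)))"
    by (simp add: sum_distrib_left sum_distrib_right hat_sym[of N _ k] mult_ac)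
  also have "\<dots> = (\<Sum>m<N-1. mesh_h N * hat_jump N k m * (\<Sum>l<N-1. hat_jump N m l * w (Suc l)))"
    by (subst sum.swap) (simp add: sum_distrib_left)
  also have "\<dots> = (\<Sum>m<N-1. mesh_h N * e * (hat_jump N k m * w (Suc m)))"
  proof (intro sum.cong refl)
    fix m assume "m \<in> {..<N-1}"
    then show "mesh_h N * hat_jump N k m * (\<Sum>l<N-1. hat_jump N m l * w (Suc l)) = mesh_h N * e * (hat_jump N k m * w (Suc m))"
      using H[of m] by simp
  qed
  also have "\<dots> = mesh_h N * e * (\<Sum>m<N-1. hat_jump N k m * w (Suc m))"
    by (simp add: sum_distrib_left)
  also have "\<dots> = mesh_h N * e^2 * w (Suc k)" using H[OF k] by (simp add: power2_eq_square)
  finally show ?thesis .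
qed




lemma det_diag: "det (mat n n (\<lambda>(i,j). if i = j then d i else (0::'a::comm_ring_1))) = (\<Prod>i = 0..<n. d i)"
proof -
  let ?D = "mat n n (\<lambda>(i,j). if i = j then d i else (0::'a))"
  have "upper_triangular ?D" unfolding upper_triangular_def by auto
  moreover have "?D \<in> carrier_mat n n" by simp
  ultimately have "det ?D = prod_list (diag_mat ?D)" by (rule det_upper_triangular)
  also have "\<dots> = (\<Prod>i = 0..<n. d i)" unfolding prod_list_diag_prod by (intro prod.cong) auto
  finally show ?thesis .
qed

lemma poly_hom_ok: "comm_ring_hom (\<lambda>p::real poly. poly p x)"
  by unfold_locales auto

lemma pencil_eval:
  assumes "A \<in> carrier_mat n n"
  shows "poly (pencil_poly A B) x = det (mat n n (\<lambda>(i,j). A$$(i,j) - x * B$$(i,j)))"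
proof -
  interpret h: comm_ring_hom "\<lambda>p::real poly. poly p x" by (rule poly_hom_ok)
  have "poly (pencil_poly A B) x = det (map_mat (\<lambda>p. poly p x) (mat n n (\<lambda>(i, j). [: A $$ (i, j), - (B $$ (i, j)) :])))"
    using assms unfolding pencil_poly_def by (simp add: h.hom_det)
  also have "map_mat (\<lambda>p. poly p x) (mat n n (\<lambda>(i, j). [: A $$ (i, j), - (B $$ (i, j)) :]))
     = mat n n (\<lambda>(i,j). A$$(i,j) - x * B$$(i,j))"
    by (rule eq_matI) auto
  finally show ?thesis .
qed

lemma stiff_idx: "i < N-1 \<Longrightarrow> l < N-1 \<Longrightarrow> stiff N $$ (i,l) = hat_jump N i l"
  by (simp add: stiff_def hat_jump_def)
lemma stab_idx: "i < N-1 \<Longrightarrow> l < N-1 \<Longrightarrow> stab N $$ (i,l) = (\<Sum>m<N-1. mesh_h N * hat_jump N m l * hat_jump N m i)"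
  by (simp add: stab_def)
lemma massG_idx: "N > 0 \<Longrightarrow> i < N-1 \<Longrightarrow> l < N-1 \<Longrightarrow>
   mass_G N $$ (i,l) = mesh_h N * (if i = l then 1 else 0) - (mesh_h N)^2/6 * hat_jump N i l"
  by (auto simp: mass_G_def hat_jump_def mesh_h_def power2_eq_square)
lemma massL_idx: "i < N-1 \<Longrightarrow> l < N-1 \<Longrightarrow> mass_L N $$ (i,l) = mesh_h N * (if i = l then 1 else 0)"
  by (simp add: mass_L_def)

lemma dims: "dim_row (stiff N) = N-1" "dim_col (stiff N) = N-1" "dim_row (stab N) = N-1" "dim_col (stab N) = N-1"
   "dim_row (mass_G N) = N-1" "dim_col (mass_G N) = N-1" "dim_row (mass_L N) = N-1" "dim_col (mass_L N) = N-1"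
  by (simp_all add: stiff_def stab_def mass_G_def mass_L_def)

definition AA :: "nat \<Rightarrow> real mat" where "AA N = stiff N - (1/20) \<cdot>\<^sub>m stab N"
definition BB :: "nat \<Rightarrow> real mat" where "BB N = (4/5) \<cdot>\<^sub>m mass_G N + (1 - 4/5) \<cdot>\<^sub>m mass_L N"

lemma AA_dim: "AA N \<in> carrier_mat (N-1) (N-1)" unfolding AA_def carrier_mat_def by (simp add: dims)

lemma Mx_idx:
  assumes "N > 0" "i < N-1" "l < N-1"
  shows "AA N $$ (i,l) - x * BB N $$ (i,l) =
    (1 + x*2*(mesh_h N)^2/15) * hat_jump N i l - (1/20) * (\<Sum>m<N-1. mesh_h N * hat_jump N m l * hat_jump N m i)
     - x * mesh_h N * (if i = l then 1 else 0)"
proof -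
  define h where "h = mesh_h N"
  define S where "S = (\<Sum>m<N-1. h * hat_jump N m l * hat_jump N m i)"
  define d where "d = (if i = l then 1 else (0::real))"
  have a: "AA N $$ (i,l) = hat_jump N i l - (1/20) * S"
    unfolding AA_def S_def h_def using assms by (simp add: dims stiff_idx stab_idx)
  have b: "BB N $$ (i,l) = 4/5 * (h * d - h^2/6 * hat_jump N i l) + (1 - 4/5) * (h * d)"
    unfolding BB_def d_def h_def using assms by (simp add: dims massG_idx massL_idx)
  show ?thesis unfolding a b S_def[symmetric] d_def[symmetric] h_def[symmetric] by (simp add: field_simps)
qed

definition ee :: "nat \<Rightarrow> nat \<Rightarrow> real" where "ee N j = mu N j / mesh_h N"
definition dd :: "nat \<Rightarrow> real \<Rightarrow> nat \<Rightarrow> real" where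
  "dd N x j = ee N j - mesh_h N * (ee N j)^2 / 20 - x * (mesh_h N - 2/15 * (mesh_h N)^2 * ee N j)"

lemma Mx_eig:
  assumes N: "N \<ge> 2" and i: "i < N-1"
  shows "(\<Sum>l<N-1. (AA N $$ (i,l) - x * BB N $$ (i,l)) * Wf N j (Suc l)) = dd N x j * Wf N j (Suc i)"
proof -
  define h where "h = mesh_h N"
  define w where "w = Wf N j"
  have H: "\<And>m. m < N-1 \<Longrightarrow> (\<Sum>l<N-1. hat_jump N m l * w (Suc l)) = ee N j * w (Suc m)"
    using J_eig N by (simp add: w_def ee_def)
  have S: "(\<Sum>l<N-1. (\<Sum>m<N-1. mesh_h N * hat_jump N m l * hat_jump N m i) * w (Suc l)) = h * (ee N j)^2 * w (Suc i)"
    using S_eig[OF H i] by (simp add: h_def)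
  have D: "(\<Sum>l<N-1. (if i = l then 1 else 0) * w (Suc l)) = w (Suc i)"
  proof -
    have "(\<Sum>l<N-1. (if i = l then 1 else 0) * w (Suc l)) = (\<Sum>l<N-1. if l = i then w (Suc i) else 0)"
      by (intro sum.cong) auto
    then show ?thesis using i by simp
  qed
  have "(\<Sum>l<N-1. (AA N $$ (i,l) - x * BB N $$ (i,l)) * w (Suc l))
     = (\<Sum>l<N-1. (1 + x*2*h^2/15) * (hat_jump N i l * w (Suc l))
          - (1/20) * ((\<Sum>m<N-1. mesh_h N * hat_jump N m l * hat_jump N m i) * w (Suc l))
          - x * h * ((if i = l then 1 else 0) * w (Suc l)))"
    using N i by (intro sum.cong refl) (simp add: Mx_idx h_def algebra_simps)
  also have "\<dots> = (1 + x*2*h^2/15) * (\<Sum>l<N-1. hat_jump N i l * w (Suc l))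
          - (1/20) * (\<Sum>l<N-1. (\<Sum>m<N-1. mesh_h N * hat_jump N m l * hat_jump N m i) * w (Suc l))
          - x * h * (\<Sum>l<N-1. (if i = l then 1 else 0) * w (Suc l))"
    by (simp add: sum_subtractf sum_distrib_left)
  also have "\<dots> = dd N x j * w (Suc i)"
    unfolding S D H[OF i] dd_def h_def by (simp add: algebra_simps power2_eq_square)
  finally show ?thesis by (simp add: w_def)
qed




definition VV :: "nat \<Rightarrow> real mat" where "VV N = mat (N-1) (N-1) (\<lambda>(k,j). Wf N j (Suc k))"
definition Mx :: "nat \<Rightarrow> real \<Rightarrow> real mat" where
  "Mx N x = mat (N-1) (N-1) (\<lambda>(i,l). AA N $$ (i,l) - x * BB N $$ (i,l))"
definition DD :: "nat \<Rightarrow> real \<Rightarrow> real mat" where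
  "DD N x = mat (N-1) (N-1) (\<lambda>(i,j). if i = j then dd N x i else 0)"

lemma MV: assumes N: "N \<ge> 2" shows "Mx N x * VV N = VV N * DD N x"
proof (rule eq_matI)
  fix i j assume i: "i < dim_row (VV N * DD N x)" and j: "j < dim_col (VV N * DD N x)"
  then have i': "i < N-1" and j': "j < N-1" by (simp_all add: VV_def DD_def)
  have "(Mx N x * VV N) $$ (i,j) = (\<Sum>l<N-1. (AA N $$ (i,l) - x * BB N $$ (i,l)) * Wf N j (Suc l))"
    using i' j' by (simp add: Mx_def VV_def scalar_prod_def atLeast0LessThan)
  also have "\<dots> = dd N x j * Wf N j (Suc i)" using Mx_eig[OF N i'] .
  also have "\<dots> = (VV N * DD N x) $$ (i,j)"
  proof -
    have "(VV N * DD N x) $$ (i,j) = (\<Sum>l<N-1. Wf N l (Suc i) * (if l = j then dd N x l else 0))"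
      using i' j' by (simp add: DD_def VV_def scalar_prod_def atLeast0LessThan)
    also have "\<dots> = (\<Sum>l<N-1. if l = j then Wf N j (Suc i) * dd N x j else 0)"
      by (intro sum.cong) auto
    also have "\<dots> = Wf N j (Suc i) * dd N x j" using j' by simp
    finally show ?thesis by simp
  qed
  finally show "(Mx N x * VV N) $$ (i,j) = (VV N * DD N x) $$ (i,j)" .
qed (simp_all add: Mx_def VV_def DD_def)

lemma th_range: assumes "N \<ge> 2" "j < N - 1" shows "0 < th N j" "th N j < pi"
proof -
  have Np: "real N > 0" using assms by simp
  have e: "th N j = (real (Suc j) / real N) * pi" by (simp add: th_def)
  have "real (Suc j) < real N" using assms by simp
  then have "real (Suc j) / real N < 1" using Np by simp
  then have "real (Suc j) / real N * pi < 1 * pi" by (rule mult_strict_right_mono) simp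
  then show "th N j < pi" unfolding e by simp
  show "0 < th N j" unfolding e using Np by simp
qed

lemma mu_inj: assumes N: "N \<ge> 2" and i: "i < N-1" and j: "j < N-1" and ne: "i \<noteq> j"
  shows "mu N i \<noteq> mu N j"
proof
  assume "mu N i = mu N j"
  then have c: "cos (th N i) = cos (th N j)" by (simp add: mu_def)
  have "th N i = th N j"
    using cos_inj_pi[OF less_imp_le[OF th_range(1)[OF N i]] less_imp_le[OF th_range(2)[OF N i]]
       less_imp_le[OF th_range(1)[OF N j]] less_imp_le[OF th_range(2)[OF N j]] c] .
  then have "real (Suc i) * pi / real N = real (Suc j) * pi / real N" by (simp only: th_def)
  then have "real (Suc i) = real (Suc j)" using N by (simp add: divide_cancel_right)
  then show False using ne by simp
qed

lemma mesh_pos: "N \<ge> 2 \<Longrightarrow> mesh_h N > 0" by (simp add: mesh_h_def)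

lemma ortho: assumes N: "N \<ge> 2" and i: "i < N-1" and j: "j < N-1" and ne: "i \<noteq> j"
  shows "(\<Sum>k<N-1. Wf N i (Suc k) * Wf N j (Suc k)) = 0"
proof -
  define a where "a = Wf N i"
  define b where "b = Wf N j"
  have Ha: "\<And>m. m < N-1 \<Longrightarrow> (\<Sum>l<N-1. hat_jump N m l * a (Suc l)) = ee N i * a (Suc m)"
    using J_eig N by (simp add: a_def ee_def)
  have Hb: "\<And>m. m < N-1 \<Longrightarrow> (\<Sum>l<N-1. hat_jump N m l * b (Suc l)) = ee N j * b (Suc m)"
    using J_eig N by (simp add: b_def ee_def)
  have "ee N i * (\<Sum>k<N-1. a (Suc k) * b (Suc k)) = (\<Sum>k<N-1. (ee N i * a (Suc k)) * b (Suc k))"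
    by (simp add: sum_distrib_left mult_ac)
  also have "\<dots> = (\<Sum>k<N-1. (\<Sum>l<N-1. hat_jump N k l * a (Suc l)) * b (Suc k))"
  proof (intro sum.cong refl)
    fix k assume "k \<in> {..<N-1}"
    then show "ee N i * a (Suc k) * b (Suc k) = (\<Sum>l<N-1. hat_jump N k l * a (Suc l)) * b (Suc k)"
      using Ha[of k] by simp
  qed
  also have "\<dots> = (\<Sum>k<N-1. \<Sum>l<N-1. hat_jump N k l * a (Suc l) * b (Suc k))"
    by (simp add: sum_distrib_right)
  also have "\<dots> = (\<Sum>l<N-1. \<Sum>k<N-1. hat_jump N k l * a (Suc l) * b (Suc k))"
    by (rule sum.swap)
  also have "\<dots> = (\<Sum>l<N-1. a (Suc l) * (\<Sum>k<N-1. hat_jump N l k * b (Suc k)))"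
  proof (intro sum.cong refl)
    fix l
    show "(\<Sum>k<N-1. hat_jump N k l * a (Suc l) * b (Suc k)) = a (Suc l) * (\<Sum>k<N-1. hat_jump N l k * b (Suc k))"
      unfolding sum_distrib_left
    proof (intro sum.cong refl)
      fix k show "hat_jump N k l * a (Suc l) * b (Suc k) = a (Suc l) * (hat_jump N l k * b (Suc k))"
        by (subst hat_sym) simp
    qed
  qed
  also have "\<dots> = (\<Sum>l<N-1. a (Suc l) * (ee N j * b (Suc l)))"
  proof (intro sum.cong refl)
    fix k assume "k \<in> {..<N-1}"
    then show "a (Suc k) * (\<Sum>l<N-1. hat_jump N k l * b (Suc l)) = a (Suc k) * (ee N j * b (Suc k))"
      using Hb[of k] by simp
  qed
  also have "\<dots> = ee N j * (\<Sum>k<N-1. a (Suc k) * b (Suc k))"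
    by (simp add: sum_distrib_left mult_ac)
  finally have "(ee N i - ee N j) * (\<Sum>k<N-1. a (Suc k) * b (Suc k)) = 0" by (simp add: algebra_simps)
  moreover have "ee N i \<noteq> ee N j" using mu_inj[OF N i j ne] mesh_pos[OF N] by (simp add: ee_def)
  ultimately show ?thesis by (simp add: a_def b_def)
qed

lemma nrm_pos: assumes N: "N \<ge> 2" and j: "j < N-1"
  shows "(\<Sum>k<N-1. Wf N j (Suc k) * Wf N j (Suc k)) > 0"
proof (rule sum_pos2[where i=0])
  show "0 \<in> {..<N-1}" using j by simp
  have "sin (th N j) > 0" using th_range[OF N j] by (intro sin_gt_zero) auto
  then show "0 < Wf N j (Suc 0) * Wf N j (Suc 0)" by (simp add: Wf_def)
qed auto

lemma det_VV: assumes N: "N \<ge> 2" shows "det (VV N) \<noteq> 0"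
proof -
  define nr where "nr j = (\<Sum>k<N-1. Wf N j (Suc k) * Wf N j (Suc k))" for j
  have V: "VV N \<in> carrier_mat (N-1) (N-1)" by (simp add: VV_def)
  have "transpose_mat (VV N) * VV N = mat (N-1) (N-1) (\<lambda>(i,j). if i = j then nr i else 0)"
  proof (rule eq_matI)
    fix i j assume "i < dim_row (mat (N-1) (N-1) (\<lambda>(i,j). if i = j then nr i else 0))"
      "j < dim_col (mat (N-1) (N-1) (\<lambda>(i,j). if i = j then nr i else 0))"
    then have i: "i < N-1" and j: "j < N-1" by auto
    have "(transpose_mat (VV N) * VV N) $$ (i,j) = (\<Sum>k<N-1. Wf N i (Suc k) * Wf N j (Suc k))"
      using i j by (simp add: VV_def scalar_prod_def atLeast0LessThan)
    also have "\<dots> = (if i = j then nr i else 0)" using ortho[OF N i j] by (auto simp: nr_def)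
    finally show "(transpose_mat (VV N) * VV N) $$ (i,j) = mat (N-1) (N-1) (\<lambda>(i,j). if i = j then nr i else 0) $$ (i,j)"
      using i j by simp
  qed (auto simp: VV_def)
  then have "det (transpose_mat (VV N) * VV N) = (\<Prod>i = 0..<N-1. nr i)" by (simp add: det_diag)
  moreover have "det (transpose_mat (VV N) * VV N) = det (VV N) * det (VV N)"
    using V by (simp add: det_mult[of _ "N-1"] det_transpose)
  moreover have "(\<Prod>i = 0..<N-1. nr i) > 0" using nrm_pos[OF N] by (intro prod_pos) (auto simp: nr_def)
  ultimately show ?thesis by (metis less_irrefl mult_zero_left)
qed

lemma det_Mx: assumes N: "N \<ge> 2" shows "det (Mx N x) = (\<Prod>j = 0..<N-1. dd N x j)"
proof -
  have V: "VV N \<in> carrier_mat (N-1) (N-1)" by (simp add: VV_def)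
  have M: "Mx N x \<in> carrier_mat (N-1) (N-1)" by (simp add: Mx_def)
  have D: "DD N x \<in> carrier_mat (N-1) (N-1)" by (simp add: DD_def)
  have "det (Mx N x * VV N) = det (VV N * DD N x)" using MV[OF N, of x] by simp
  then have "det (Mx N x) * det (VV N) = det (VV N) * det (DD N x)"
    unfolding det_mult[OF M V] det_mult[OF V D] .
  then have "det (Mx N x) = det (DD N x)" using det_VV[OF N] by (metis mult.commute mult_left_cancel)
  then show ?thesis by (simp add: DD_def det_diag)
qed




definition aa :: "nat \<Rightarrow> nat \<Rightarrow> real" where "aa N j = ee N j - mesh_h N * (ee N j)^2 / 20"
definition bb :: "nat \<Rightarrow> nat \<Rightarrow> real" where "bb N j = mesh_h N - 2/15 * (mesh_h N)^2 * ee N j"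

lemma pencil_prod: assumes N: "N \<ge> 2"
  shows "pencil_poly (AA N) (BB N) = (\<Prod>j = 0..<N-1. [:aa N j, - bb N j:])"
proof -
  have "poly (pencil_poly (AA N) (BB N)) x = poly (\<Prod>j = 0..<N-1. [:aa N j, - bb N j:]) x" for x
  proof -
    have "poly (pencil_poly (AA N) (BB N)) x = det (Mx N x)"
      unfolding Mx_def by (rule pencil_eval[OF AA_dim])
    also have "\<dots> = (\<Prod>j = 0..<N-1. dd N x j)" by (rule det_Mx[OF N])
    also have "\<dots> = poly (\<Prod>j = 0..<N-1. [:aa N j, - bb N j:]) x"
      by (simp add: poly_prod dd_def aa_def bb_def algebra_simps)
    finally show ?thesis .
  qed
  then show ?thesis using poly_eq_poly_eq_iff by blast
qed

lemma order_lin: fixes a b :: real assumes "b \<noteq> 0" shows "order y [:a, - b:] = (if y = a / b then 1 else 0)"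
proof -
  have ab: "b * (a / b) = a" using assms by simp
  have e: "[:a, - b:] = smult (- b) [:- (a/b), 1:]" by (simp add: ab assms)
  have o: "order y [:a, - b:] = order y [:- (a/b), 1:]"
    by (subst e) (rule order_smult, use assms in simp)
  show ?thesis
  proof (cases "y = a / b")
    case True
    have "order (a/b) [:- (a/b), 1:] = 1" using order_power_n_n[of "a/b" 1] by simp
    then show ?thesis unfolding o using True by simp
  next
    case False
    have "poly [:a, - b:] y \<noteq> 0" using assms False by (auto simp: field_simps)
    then show ?thesis using False by (simp add: order_0I)
  qed
qed

lemma order_prod_lin:
  fixes a b :: "nat \<Rightarrow> real"
  assumes "\<And>j. j < n \<Longrightarrow> b j \<noteq> 0"
  shows "order y (\<Prod>j = 0..<n. [:a j, - b j:]) = count (mset (map (\<lambda>j. a j / b j) [0..<n])) y"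
  using assms
proof (induction n)
  case 0 then show ?case by (simp add: order_0I)
next
  case (Suc n)
  have nz: "(\<Prod>j = 0..<n. [:a j, - b j:]) \<noteq> 0" using Suc.prems by (auto simp: prod_zero_iff)
  have nz2: "[:a n, - b n:] \<noteq> 0" using Suc.prems by auto
  have "order y (\<Prod>j = 0..<Suc n. [:a j, - b j:]) = order y ((\<Prod>j = 0..<n. [:a j, - b j:]) * [:a n, - b n:])"
    by (simp only: prod.atLeast0_lessThan_Suc)
  also have "\<dots> = order y (\<Prod>j = 0..<n. [:a j, - b j:]) + order y [:a n, - b n:]"
    by (rule order_mult) (metis nz nz2 mult_eq_0_iff)
  also have "\<dots> = count (mset (map (\<lambda>j. a j / b j) [0..<n])) y + (if y = a n / b n then 1 else 0)"
    using Suc by (simp add: order_lin)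
  finally show ?case by simp
qed

lemma mu_range: assumes N: "N \<ge> 2" and j: "j < N-1" shows "0 \<le> mu N j" "mu N j \<le> 4"
  using cos_le_one[of "th N j"] cos_ge_minus_one[of "th N j"] unfolding mu_def by linarith+

lemma bb_eq: "N \<ge> 2 \<Longrightarrow> bb N j = mesh_h N * (1 - 2/15 * mu N j)"
  by (simp add: bb_def ee_def power2_eq_square mesh_h_def field_simps)

lemma bb_pos: assumes N: "N \<ge> 2" and j: "j < N-1" shows "bb N j > 0"
  using mu_range[OF N j] mesh_pos[OF N] bb_eq[OF N] by (simp add: mult_pos_pos)

definition fmu :: "real \<Rightarrow> real" where "fmu m = (m - m^2/20) / (1 - 2/15*m)"

lemma root_eq: assumes N: "N \<ge> 2" and j: "j < N-1" shows "aa N j / bb N j = fmu (mu N j) / (mesh_h N)^2"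
proof -
  have h: "mesh_h N > 0" using mesh_pos[OF N] .
  have d: "1 - 2/15 * mu N j > 0" using mu_range[OF N j] by simp
  have "aa N j = (mu N j - (mu N j)^2/20) / mesh_h N" using h
    by (simp add: aa_def ee_def power2_eq_square field_simps)
  then have "aa N j / bb N j = ((mu N j - (mu N j)^2/20) / mesh_h N) / (mesh_h N * (1 - 2/15 * mu N j))"
    using bb_eq[OF N] by simp
  also have "\<dots> = ((mu N j - (mu N j)^2/20) / (1 - 2/15 * mu N j)) / (mesh_h N)^2"
    using h d by (simp add: field_simps power2_eq_square)
  finally show ?thesis by (simp add: fmu_def)
qed

lemma fmu_id: "(m2 - m2^2/20)*(1 - 2/15*m1) - (m1 - m1^2/20)*(1 - 2/15*m2)
      = (m2 - m1)*(1 - (m1+m2)/20 + m1*m2/(150::real))"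
  by (simp add: field_simps) Groebner_Basis.algebra

lemma fmu_mono: assumes "0 \<le> m1" "m1 \<le> m2" "m2 \<le> 4" shows "fmu m1 \<le> fmu m2"
proof -
  have d1: "1 - 2/15*m1 > 0" "1 - 2/15*m2 > 0" using assms by auto
  have id: "(m2 - m2^2/20)*(1 - 2/15*m1) - (m1 - m1^2/20)*(1 - 2/15*m2)
      = (m2 - m1)*(1 - (m1+m2)/20 + m1*m2/150)"
    by (rule fmu_id)
  have "(m2 - m1)*(1 - (m1+m2)/20 + m1*m2/150) \<ge> 0"
    using assms by (intro mult_nonneg_nonneg) auto
  then have "0 \<le> (m2 - m2^2/20)*(1 - 2/15*m1) - (m1 - m1^2/20)*(1 - 2/15*m2)" unfolding id .
  then have "(m1 - m1^2/20)*(1 - 2/15*m2) \<le> (m2 - m2^2/20)*(1 - 2/15*m1)" by simp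
  then show ?thesis unfolding fmu_def using d1 by (simp add: divide_le_eq le_divide_eq field_simps)
qed

lemma mu_mono: assumes N: "N \<ge> 2" and ij: "i \<le> j" and j: "j < N-1" shows "mu N i \<le> mu N j"
proof -
  have i: "i < N - 1" using ij j by simp
  have "th N i \<le> th N j" using ij N by (simp add: th_def divide_right_mono)
  then have "cos (th N j) \<le> cos (th N i)"
    using th_range[OF N i] th_range[OF N j] by (intro cos_monotone_0_pi_le) auto
  then show ?thesis by (simp add: mu_def)
qed

lemma eig_formula: assumes N: "N \<ge> 2" and j1: "1 \<le> j" and jN: "j \<le> N - 1"
  shows "softfembq_eig (1/20) (4/5) N j = fmu (mu N (j-1)) / (mesh_h N)^2"
proof -
  have bnz: "\<And>i. i < N-1 \<Longrightarrow> bb N i \<noteq> 0" using bb_pos[OF N] by (metis less_irrefl)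
  have "(\<lambda>y. order y (pencil_poly (AA N) (BB N))) = count (mset (map (\<lambda>i. aa N i / bb N i) [0..<N-1]))"
    by (rule ext) (simp only: pencil_prod[OF N] order_prod_lin[OF bnz])
  then have R: "root_mset (pencil_poly (AA N) (BB N)) = mset (map (\<lambda>i. aa N i / bb N i) [0..<N-1])"
    unfolding root_mset_def by simp
  have S: "sorted (map (\<lambda>i. aa N i / bb N i) [0..<N-1])"
  proof (subst sorted_iff_nth_mono, intro allI impI)
    fix p q assume pq: "p \<le> q" and q: "q < length (map (\<lambda>i. aa N i / bb N i) [0..<N - 1])"
    then have q': "q < N-1" by simp
    then have p': "p < N-1" using pq by simp
    have "fmu (mu N p) \<le> fmu (mu N q)"
      using mu_range[OF N p'] mu_range[OF N q'] mu_mono[OF N pq q'] by (intro fmu_mono) auto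
    then have "aa N p / bb N p \<le> aa N q / bb N q" unfolding root_eq[OF N p'] root_eq[OF N q'] using mesh_pos[OF N]
      by (simp add: divide_right_mono)
    then show "map (\<lambda>i. aa N i / bb N i) [0..<N - 1] ! p \<le> map (\<lambda>i. aa N i / bb N i) [0..<N - 1] ! q"
      using p' q' by simp
  qed
  have "softfembq_eig (1/20) (4/5) N j = sorted_list_of_multiset (root_mset (pencil_poly (AA N) (BB N))) ! (j-1)"
    unfolding softfembq_eig_def gen_eig_def AA_def BB_def ..
  also have "\<dots> = map (\<lambda>i. aa N i / bb N i) [0..<N-1] ! (j-1)"
    unfolding R sorted_list_of_multiset_mset sorted_sort_id[OF S] ..
  also have "\<dots> = aa N (j-1) / bb N (j-1)"
  proof -
    have jl: "j - 1 < N - 1" using j1 jN by simp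
    then show ?thesis by (simp add: nth_map)
  qed
  also have "\<dots> = fmu (mu N (j-1)) / (mesh_h N)^2" using j1 jN by (intro root_eq[OF N]) simp
  finally show ?thesis .
qed


lemma fmu_cos: assumes "-1 \<le> c" shows "fmu (2 - 2*c) = 3*(1-c)*(9+c)/(11+4*c)"
proof -
  have d: "11 + 4*c > 0" "1 - 2/15*(2-2*c) > 0" using assms by auto
  have e: "1 - 2/15*(2-2*c) = (11+4*c)/15" by (simp add: field_simps)
  have n: "(2 - 2*c) - (2-2*c)^2/20 = (1-c)*(9+c)/5" by (simp add: field_simps) Groebner_Basis.algebra
  have "fmu (2 - 2*c) = ((1-c)*(9+c)/5) / ((11+4*c)/15)" by (simp only: fmu_def n e)
  also have "\<dots> = 3*(1-c)*(9+c)/(11+4*c)" using d by (simp add: field_simps)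
  finally show ?thesis .
qed

lemma rescale: fixes F t h :: real assumes h: "h > 0" and t: "t > 0"
  shows "\<bar>F / h^2 - (t/h)^2\<bar> / (t/h)^2 = \<bar>F - t^2\<bar> / t^2"
proof -
  have "F / h^2 - (t/h)^2 = (F - t^2) / h^2" by (simp add: power_divide diff_divide_distrib)
  then have "\<bar>F / h^2 - (t/h)^2\<bar> = \<bar>F - t^2\<bar> / h^2" by simp
  then show ?thesis using h t by (simp add: power_divide)
qed

theorem theorem2:
  fixes N j :: nat
  assumes "N \<ge> 2" and "1 \<le> j" and "j \<le> N - 1"
  shows "\<bar>softfembq_eig (1/20) (4/5) N j - (real j * pi)^2\<bar> / (real j * pi)^2
           < (1/1440) * (real j * pi * mesh_h N) ^ 6"
proof -
  note N = assms(1)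
  define t where "t = th N (j-1)"
  define h where "h = mesh_h N"
  have h0: "h > 0" using mesh_pos[OF N] by (simp add: h_def)
  have jl: "j - 1 < N - 1" using assms by simp
  have t0: "0 < t" "t < pi" using th_range[OF N jl] by (simp_all add: t_def)
  have tj: "t = real j * pi * h" using assms by (simp add: t_def th_def h_def mesh_h_def)
  have jt: "real j * pi = t / h" using h0 tj by simp
  define F where "F = 3*(1 - cos t)*(9 + cos t)/(11 + 4*cos t)"
  have E: "softfembq_eig (1/20) (4/5) N j = F / h^2"
    using eig_formula[OF assms] fmu_cos[of "cos t"] by (simp add: mu_def t_def h_def F_def)
  have "\<bar>softfembq_eig (1/20) (4/5) N j - (real j * pi)^2\<bar> / (real j * pi)^2
      = \<bar>F / h^2 - (t/h)^2\<bar> / (t/h)^2" by (simp only: E jt)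
  also have "\<dots> = \<bar>F - t^2\<bar> / t^2" by (rule rescale[OF h0 t0(1)])
  finally have "\<bar>softfembq_eig (1/20) (4/5) N j - (real j * pi)^2\<bar> / (real j * pi)^2
      = \<bar>3*(1 - cos t)*(9 + cos t)/(11 + 4*cos t) - t^2\<bar> / t^2" by (simp only: F_def)
  also have "\<dots> < t^6/1440" using key_ineq[OF t0(1)] t0(2) by simp
  also have "\<dots> = (1/1440) * (real j * pi * mesh_h N) ^ 6" by (simp add: tj h_def)
  finally show ?thesis .
qed

end
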